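(* Let $n\ge 4$ and $2\le t\le n-2$, and suppose that the covariance matrix $\Sigma(t)=\mathsf{var}(\vec a(t))$ is invertible and that $\mathsf{var}(W_1(t))\ne \mathsf{cov}(W_1(t),W_2(t))$ and $\mathsf{var}(D_1(t))\ne\mathsf{cov}(D_1(t),D_2(t))$. Define \[ c_1(t)=\frac{\mathsf{var}(W_2(t))-\mathsf{cov}(W_1(t),W_2(t))}{\mathsf{var}(W_1(t))-\mathsf{cov}(W_1(t),W_2(t))},\qquad c_2(t)=\frac{\mathsf{var}(D_2(t))-\mathsf{cov}(D_1(t),D_2(t))}{\mathsf{var}(D_1(t))-\mathsf{cov}(D_1(t),D_2(t))}, \] and \[ W_{\mathrm{Diff}}(t)=W_1(t)-W_2(t),\quad D_{\mathrm{Diff}}(t)=D_1(t)-D_2(t),\quad W_{\mathrm{Sum}}(t)=c_1(t)W_1(t)+W_2(t),\quad D_{\mathrm{Sum}}(t)=c_2(t)D_1(t)+D_2(t). \] Then these four quantities have positive variance, their standardized versions $Z_{W_{\mathrm{Diff}}}(t),Z_{D_{\mathrm{Diff}}}(t),Z_{W_{\mathrm{Sum}}}(t),Z_{D_{\mathrm{Sum}}}(t)$ are pairwise uncorrelated under the permutation null, and \[ S(t)=Z_{W_{\mathrm{Diff}}}(t)^2+Z_{D_{\mathrm{Diff}}}(t)^2+Z_{W_{\mathrm{Sum}}}(t)^2+Z_{D_{\mathrm{Sum}}}(t)^2 . \]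
   Context: Let $G_1,\dots,G_n$ be a sequence of observations (networks) and let $K_1,K_2$ be two real symmetric $n\times n$ kernel matrices computed from this sequence, with $(i,j)$ entry $k_{xij}$ of $K_x$, $x\in\{1,2\}$. The permutation null distribution assigns probability $1/n!$ to each of the $n!$ permutations of the sequence, i.e. the kernel matrices $K_x$ are replaced by $(k_{x\pi(i)\pi(j)})_{i,j}$ for a uniformly random permutation $\pi$ of $\{1,\dots,n\}$ (the same $\pi$ for both kernels); $\mathsf{E},\mathsf{var},\mathsf{cov}$ denote expectation, variance and covariance under this distribution. For a quantity $T$, its standardized version is $Z_T=(T-\mathsf{E}T)/\sqrt{\mathsf{var}(T)}$. For $x\in\{1,2\}$ define \[ \alpha_x(t)=\frac{1}{t(t-1)}\sum_{i=1}^n\sum_{j\ne i}k_{xij}\mathbb{1}\{i,j\le t\},\qquad \beta_x(t)=\frac{1}{(n-t)(n-t-1)}\sum_{i=1}^n\sum_{j\ne i}k_{xij}\mathbb{1}\{i,j> t\}, \] \[ W_x(t)=\frac{t}{n}\alpha_x(t)+\frac{n-t}{n}\beta_x(t),\qquad D_x(t)=\frac{t(t-1)}{n(n-1)}\alpha_x(t)-\frac{(n-t)(n-t-1)}{n(n-1)}\beta_x(t). \] Let $\vec a(t)=[\alpha_1(t),\beta_1(t),\alpha_2(t),\beta_2(t)]^{\mathsf T}$, $\Sigma(t)=\mathsf{var}(\vec a(t))$ (the $4\times4$ covariance matrix under the permutation null), and \[ S(t)=[\vec a(t)-\mathsf{E}\vec a(t)]^{\mathsf T}\Sigma(t)^{-1}[\vec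 a(t)-\mathsf{E}\vec a(t)]. \] *)

theory Defs
  imports "HOL-Analysis.Analysis" "HOL-Combinatorics.Permutations"
begin

text \<open>Observations are indexed by 1..n; a kernel matrix is a function nat => nat => real,
  only its values on 1..n matter. A statistic under the permutation null is a
  function of the permutation p (p permutes 1..n); the permuted kernel entry (i,j) is
  K (p i) (p j). The identity permutation gives the observed statistic.\<close>

type_synonym perm_stat = "(nat \<Rightarrow> nat) \<Rightarrow> real"

definition pexp :: "nat \<Rightarrow> perm_stat \<Rightarrow> real" where
  "pexp n X = (\<Sum>p\<in>{p. p permutes {1..n}}. X p) / fact n"

definition pcov :: "nat \<Rightarrow> perm_stat \<Rightarrow> perm_stat \<Rightarrow> real" where
  "pcov n X Y = pexp n (\<lambda>p. (X p - pexp n X) * (Y p - pexp n Y))"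

definition pvar :: "nat \<Rightarrow> perm_stat \<Rightarrow> real" where
  "pvar n X = pcov n X X"

definition zstd :: "nat \<Rightarrow> perm_stat \<Rightarrow> perm_stat" where
  "zstd n X = (\<lambda>p. (X p - pexp n X) / sqrt (pvar n X))"

definition alpha :: "nat \<Rightarrow> (nat \<Rightarrow> nat \<Rightarrow> real) \<Rightarrow> nat \<Rightarrow> perm_stat" where
  "alpha n K t = (\<lambda>p. 1 / (real t * (real t - 1)) *
     (\<Sum>i\<in>{1..n}. \<Sum>j\<in>{1..n} - {i}. if i \<le> t \<and> j \<le> t then K (p i) (p j) else 0))"

definition beta :: "nat \<Rightarrow> (nat \<Rightarrow> nat \<Rightarrow> real) \<Rightarrow> nat \<Rightarrow> perm_stat" where
  "beta n K t = (\<lambda>p. 1 / ((real n - real t) * (real n - real t - 1)) *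
     (\<Sum>i\<in>{1..n}. \<Sum>j\<in>{1..n} - {i}. if i > t \<and> j > t then K (p i) (p j) else 0))"

definition Wstat :: "nat \<Rightarrow> (nat \<Rightarrow> nat \<Rightarrow> real) \<Rightarrow> nat \<Rightarrow> perm_stat" where
  "Wstat n K t = (\<lambda>p. real t / real n * alpha n K t p
                      + (real n - real t) / real n * beta n K t p)"

definition Dstat :: "nat \<Rightarrow> (nat \<Rightarrow> nat \<Rightarrow> real) \<Rightarrow> nat \<Rightarrow> perm_stat" where
  "Dstat n K t = (\<lambda>p. real t * (real t - 1) / (real n * (real n - 1)) * alpha n K t p
      - (real n - real t) * (real n - real t - 1) / (real n * (real n - 1)) * beta n K t p)"

definition avec :: "nat \<Rightarrow> (nat \<Rightarrow> nat \<Rightarrow> real) \<Rightarrow> (nat \<Rightarrow> nat \<Rightarrow> real) \<Rightarrow> nat \<Rightarrow> 4 \<Rightarrow> perm_stat" where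
  "avec n K1 K2 t i = (if i = 0 then alpha n K1 t else if i = 1 then beta n K1 t
                       else if i = 2 then alpha n K2 t else beta n K2 t)"

definition Sigma_mat :: "nat \<Rightarrow> (nat \<Rightarrow> nat \<Rightarrow> real) \<Rightarrow> (nat \<Rightarrow> nat \<Rightarrow> real) \<Rightarrow> nat \<Rightarrow> real^4^4" where
  "Sigma_mat n K1 K2 t = (\<chi> i j. pcov n (avec n K1 K2 t i) (avec n K1 K2 t j))"

definition Sstat :: "nat \<Rightarrow> (nat \<Rightarrow> nat \<Rightarrow> real) \<Rightarrow> (nat \<Rightarrow> nat \<Rightarrow> real) \<Rightarrow> nat \<Rightarrow> perm_stat" where
  "Sstat n K1 K2 t = (\<lambda>p. let v = (\<chi> i. avec n K1 K2 t i p - pexp n (avec n K1 K2 t i))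
      in v \<bullet> (matrix_inv (Sigma_mat n K1 K2 t) *v v))"

end

theory Submission
  imports Defs
begin


lemma U4: "(UNIV::4 set) = {0,1,2,3}"
proof -
  have "(4::4) = 0" by simp
  with UNIV_4 show ?thesis by auto
qed

lemma sum4: "sum f (UNIV::4 set) = f 0 + f 1 + f 2 + f 3"
  unfolding U4 by (simp add: add.assoc)

lemma finP: "finite {p. p permutes {1..(n::nat)}}"
  by (simp add: finite_permutations)

lemma cardP: "card {p. p permutes {1..(n::nat)}} = fact n"
  by (simp add: card_permutations)

lemma pexp_add: "pexp n (\<lambda>p. X p + Y p) = pexp n X + pexp n Y"
  unfolding pexp_def by (simp add: sum.distrib add_divide_distrib)

lemma pexp_diff: "pexp n (\<lambda>p. X p - Y p) = pexp n X - pexp n Y"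
  unfolding pexp_def by (simp add: sum_subtractf diff_divide_distrib)

lemma pexp_scale: "pexp n (\<lambda>p. c * X p) = c * pexp n X"
  unfolding pexp_def by (simp add: sum_distrib_left)

lemma pexp_const: "pexp n (\<lambda>p. c) = c"
  unfolding pexp_def using cardP[of n] by simp

lemma pexp_cong: "(\<And>p. p permutes {1..n} \<Longrightarrow> X p = Y p) \<Longrightarrow> pexp n X = pexp n Y"
  unfolding pexp_def by (metis (mono_tags, lifting) mem_Collect_eq sum.cong)

lemma pexp_sumI: "pexp n (\<lambda>p. \<Sum>k\<in>I. f k p) = (\<Sum>k\<in>I. pexp n (f k))"
  unfolding pexp_def by (simp add: sum.swap[of _ I] sum_divide_distrib)



lemma pcov_alt: "pcov n X Y = pexp n (\<lambda>p. X p * Y p) - pexp n X * pexp n Y"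
proof -
  have "pcov n X Y = pexp n (\<lambda>p. (X p * Y p - pexp n Y * X p) - (pexp n X * Y p - pexp n X * pexp n Y))"
    unfolding pcov_def by (rule arg_cong[where f="pexp n"]) (auto simp: algebra_simps)
  also have "\<dots> = pexp n (\<lambda>p. X p * Y p) - pexp n X * pexp n Y"
    by (simp add: pexp_diff pexp_scale pexp_const)
  finally show ?thesis .
qed

lemma pcov_sym: "pcov n X Y = pcov n Y X"
  unfolding pcov_alt by (simp add: mult.commute)

lemma pcov_cong: "(\<And>p. p permutes {1..n} \<Longrightarrow> X p = X' p) \<Longrightarrow> (\<And>p. p permutes {1..n} \<Longrightarrow> Y p = Y' p)
   \<Longrightarrow> pcov n X Y = pcov n X' Y'"
  unfolding pcov_alt by (metis (no_types, lifting) pexp_cong)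

lemma pcov_add_left: "pcov n (\<lambda>p. X p + Y p) Z = pcov n X Z + pcov n Y Z"
  unfolding pcov_alt by (simp add: distrib_right pexp_add algebra_simps)

lemma pcov_diff_left: "pcov n (\<lambda>p. X p - Y p) Z = pcov n X Z - pcov n Y Z"
  unfolding pcov_alt by (simp add: left_diff_distrib pexp_diff algebra_simps)

lemma pcov_scale_left: "pcov n (\<lambda>p. c * X p) Z = c * pcov n X Z"
  unfolding pcov_alt by (simp add: pexp_scale algebra_simps)

lemma pcov_const_left: "pcov n (\<lambda>p. c) Z = 0"
  unfolding pcov_alt by (simp add: pexp_scale pexp_const)

lemma pcov_add_right: "pcov n Z (\<lambda>p. X p + Y p) = pcov n Z X + pcov n Z Y"
  unfolding pcov_sym[of n Z] by (rule pcov_add_left)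
lemma pcov_diff_right: "pcov n Z (\<lambda>p. X p - Y p) = pcov n Z X - pcov n Z Y"
  unfolding pcov_sym[of n Z] by (rule pcov_diff_left)
lemma pcov_scale_right: "pcov n Z (\<lambda>p. c * X p) = c * pcov n Z X"
  unfolding pcov_sym[of n Z] by (rule pcov_scale_left)
lemma pcov_const_right: "pcov n Z (\<lambda>p. c) = 0"
  unfolding pcov_sym[of n Z] by (rule pcov_const_left)



lemma pcov_sum_left: "pcov n (\<lambda>p. \<Sum>k\<in>I. c k * X k p) Z = (\<Sum>k\<in>I. c k * pcov n (X k) Z)"
proof -
  have 1: "pexp n (\<lambda>p. (\<Sum>k\<in>I. c k * X k p) * Z p) = (\<Sum>k\<in>I. c k * pexp n (\<lambda>p. X k p * Z p))"
    by (simp add: sum_distrib_right pexp_sumI mult.assoc pexp_scale)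
  have 2: "pexp n (\<lambda>p. \<Sum>k\<in>I. c k * X k p) = (\<Sum>k\<in>I. c k * pexp n (X k))"
    by (simp add: pexp_sumI pexp_scale)
  show ?thesis unfolding pcov_alt 1 2
    by (simp add: right_diff_distrib sum_subtractf sum_distrib_right mult.assoc)
qed

lemma pcov_sum_right: "pcov n Z (\<lambda>p. \<Sum>k\<in>I. c k * X k p) = (\<Sum>k\<in>I. c k * pcov n Z (X k))"
  unfolding pcov_sym[of n Z] by (rule pcov_sum_left)

lemma pvar_nonneg: "pvar n X \<ge> 0"
  unfolding pvar_def pcov_def pexp_def by (auto intro!: divide_nonneg_pos sum_nonneg)

lemma pvar_zero_const:
  assumes "pvar n X = 0" "p permutes {1..n}"
  shows "X p = pexp n X"
proof -
  have "(\<Sum>q\<in>{p. p permutes {1..n}}. (X q - pexp n X) * (X q - pexp n X)) = 0"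
    using assms(1) unfolding pvar_def pcov_def pexp_def by simp
  then have "\<forall>q\<in>{p. p permutes {1..n}}. (X q - pexp n X) * (X q - pexp n X) = 0"
    by (subst (asm) sum_nonneg_eq_0_iff[OF finP]) auto
  then show ?thesis using assms(2) by auto
qed

lemma pvar_zero_cov: "pvar n X = 0 \<Longrightarrow> pcov n X Y = 0"
proof -
  assume a: "pvar n X = 0"
  have "pcov n X Y = pcov n (\<lambda>p. pexp n X) Y"
    by (rule pcov_cong) (auto intro: pvar_zero_const[OF a])
  then show ?thesis by (simp add: pcov_const_left)
qed



lemma pcov_zstd: "pcov n (zstd n X) (zstd n Y) = pcov n X Y / (sqrt (pvar n X) * sqrt (pvar n Y))"
proof -
  have e: "zstd n X = (\<lambda>p. (1 / sqrt (pvar n X)) * X p - pexp n X / sqrt (pvar n X))" for X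
    unfolding zstd_def by (auto simp: diff_divide_distrib)
  have "pcov n (zstd n X) (zstd n Y) = (1 / sqrt (pvar n X)) * ((1 / sqrt (pvar n Y)) * pcov n X Y)"
    unfolding e pcov_diff_left pcov_diff_right pcov_scale_left pcov_scale_right
      pcov_const_left pcov_const_right by simp
  then show ?thesis by simp
qed




lemma exists_perm_map:
  "distinct xs \<Longrightarrow> distinct ys \<Longrightarrow> length xs = length ys \<Longrightarrow> set xs \<subseteq> S \<Longrightarrow> set ys \<subseteq> S
   \<Longrightarrow> \<exists>\<sigma>. \<sigma> permutes S \<and> map \<sigma> xs = ys"
proof (induction xs arbitrary: ys)
  case Nil
  then show ?case by (auto intro: permutes_id)
next
  case (Cons x xs)
  then obtain y ys' where ys: "ys = y # ys'" by (cases ys) auto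
  from Cons ys obtain \<sigma>0 where s0: "\<sigma>0 permutes S" "map \<sigma>0 xs = ys'" by auto
  define z where "z = \<sigma>0 x"
  define \<sigma> where "\<sigma> = Transposition.transpose z y \<circ> \<sigma>0"
  have zS: "z \<in> S" using Cons.prems permutes_in_image[OF s0(1)] unfolding z_def by auto
  have yS: "y \<in> S" using Cons.prems ys by auto
  have sp: "\<sigma> permutes S" unfolding \<sigma>_def
    by (rule permutes_compose[OF s0(1) permutes_swap_id[OF zS yS]])
  have sx: "\<sigma> x = y" unfolding \<sigma>_def z_def by simp
  have "\<sigma> u = \<sigma>0 u" if u: "u \<in> set xs" for u
  proof -
    have "\<sigma>0 u \<in> set ys'" using u s0(2) by auto
    then have 1: "\<sigma>0 u \<noteq> y" using Cons.prems ys by auto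
    have "u \<noteq> x" using u Cons.prems by auto
    then have 2: "\<sigma>0 u \<noteq> z" unfolding z_def using permutes_inj[OF s0(1)] by (auto dest: injD)
    show ?thesis unfolding \<sigma>_def using 1 2 by (simp add: transpose_apply_other)
  qed
  then have "map \<sigma> xs = ys'" using s0(2) by (metis map_eq_conv)
  then show ?case using sp sx ys by auto
qed

lemma perm_sum_map_inv:
  assumes "distinct xs" "distinct ys" "length xs = length ys" "set xs \<subseteq> S" "set ys \<subseteq> S"
  shows "(\<Sum>p\<in>{p. p permutes S}. f (map p xs)) = (\<Sum>p\<in>{p. p permutes S}. f (map p ys))"
proof -
  obtain \<sigma> where s: "\<sigma> permutes S" "map \<sigma> ys = xs"
    using exists_perm_map[of ys xs S] assms by auto
  have "(\<Sum>p\<in>{p. p permutes S}. f (map p ys)) = (\<Sum>p\<in>{p. p permutes S}. f (map (p \<circ> \<sigma>) ys))"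
    by (rule sum_permutations_compose_right[OF s(1)])
  also have "\<dots> = (\<Sum>p\<in>{p. p permutes S}. f (map p xs))"
    using s(2) by (simp flip: map_map)
  finally show ?thesis by simp
qed




definition Gam :: "nat \<Rightarrow> (nat \<Rightarrow> nat \<Rightarrow> real) \<Rightarrow> (nat \<Rightarrow> real) \<Rightarrow> nat \<Rightarrow> nat \<Rightarrow> nat \<Rightarrow> real" where
  "Gam n K \<phi> i j m = (\<Sum>p\<in>{p. p permutes {1..n}}. K (p i) (p j) * \<phi> (p m))"

lemma Gam_pattern:
  assumes "3 \<le> n" "i \<in> {1..n}" "j \<in> {1..n}" "m \<in> {1..n}" "i \<noteq> j"
  shows "Gam n K \<phi> i j m = Gam n K \<phi> 1 2 3
     + (if m = i then Gam n K \<phi> 1 2 1 - Gam n K \<phi> 1 2 3 else 0)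
     + (if m = j then Gam n K \<phi> 1 2 2 - Gam n K \<phi> 1 2 3 else 0)"
proof (cases "m = i")
  case True
  have "Gam n K \<phi> i j m = Gam n K \<phi> 1 2 1"
    using perm_sum_map_inv[of "[i,j]" "[1,2]" "{1..n}" "\<lambda>l. K (l!0) (l!1) * \<phi> (l!0)"] assms True
    unfolding Gam_def by simp
  then show ?thesis using True assms by simp
next
  case F: False
  show ?thesis
  proof (cases "m = j")
    case True
    have "Gam n K \<phi> i j m = Gam n K \<phi> 1 2 2"
      using perm_sum_map_inv[of "[i,j]" "[1,2]" "{1..n}" "\<lambda>l. K (l!0) (l!1) * \<phi> (l!1)"] assms True
      unfolding Gam_def by simp
    then show ?thesis using True F assms by simp
  next
    case False
    have "Gam n K \<phi> i j m = Gam n K \<phi> 1 2 3"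
      using perm_sum_map_inv[of "[i,j,m]" "[1,2,3]" "{1..n}" "\<lambda>l. K (l!0) (l!1) * \<phi> (l!2)"] assms False F
      unfolding Gam_def by simp
    then show ?thesis using False F assms by simp
  qed
qed

lemma Gam_sumM:
  assumes "3 \<le> n" "i \<in> {1..n}" "j \<in> {1..n}" "i \<noteq> j" "M \<subseteq> {1..n}"
  shows "(\<Sum>m\<in>M. Gam n K \<phi> i j m) = real (card M) * Gam n K \<phi> 1 2 3
     + (if i \<in> M then Gam n K \<phi> 1 2 1 - Gam n K \<phi> 1 2 3 else 0)
     + (if j \<in> M then Gam n K \<phi> 1 2 2 - Gam n K \<phi> 1 2 3 else 0)"
proof -
  have fM: "finite M" using assms(5) finite_subset by blast
  have "(\<Sum>m\<in>M. Gam n K \<phi> i j m) = (\<Sum>m\<in>M. Gam n K \<phi> 1 2 3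
     + (if m = i then Gam n K \<phi> 1 2 1 - Gam n K \<phi> 1 2 3 else 0)
     + (if m = j then Gam n K \<phi> 1 2 2 - Gam n K \<phi> 1 2 3 else 0))"
    by (rule sum.cong[OF refl], rule Gam_pattern) (use assms in auto)
  then show ?thesis using fM by (simp add: sum.distrib sum.delta)
qed

lemma sum_perm_pair:
  fixes i j n :: nat and K :: "nat \<Rightarrow> nat \<Rightarrow> real"
  assumes "2 \<le> n" "i \<in> {1..n}" "j \<in> {1..n}" "i \<noteq> j"
  shows "(\<Sum>p\<in>{p. p permutes {1..n}}. K (p i) (p j)) = (\<Sum>p\<in>{p. p permutes {1..n}}. K (p 1) (p 2))"
  using perm_sum_map_inv[of "[i,j]" "[1,2]" "{1..n}" "\<lambda>l. K (l!0) (l!1)"] assms by simp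

lemma sum_perm_single:
  fixes m n :: nat
  assumes "m \<in> {1..n}"
  shows "(\<Sum>p\<in>{p. p permutes {1..n}}. \<phi> (p m)) = (\<Sum>p\<in>{p. p permutes {1..n}}. \<phi> (p 1))"
proof -
  have "1 \<le> n" using assms by simp
  then show ?thesis
    using perm_sum_map_inv[of "[m]" "[1]" "{1..n}" "\<lambda>l. \<phi> (l!0)"] assms by simp
qed

lemma sum_perm_image:
  assumes "p permutes S"
  shows "(\<Sum>m\<in>S. \<phi> (p m)) = (\<Sum>a\<in>S. \<phi> a)"
  using sum.permute[OF assms, of \<phi>] by (simp add: o_def)

lemma Gam_constraint:
  assumes "3 \<le> n"
  shows "real n * Gam n K \<phi> 1 2 3 + (Gam n K \<phi> 1 2 1 - Gam n K \<phi> 1 2 3) + (Gam n K \<phi> 1 2 2 - Gam n K \<phi> 1 2 3)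
    = (\<Sum>p\<in>{p. p permutes {1..n}}. K (p 1) (p 2)) * (\<Sum>a\<in>{1..n}. \<phi> a)"
proof -
  have "(\<Sum>m\<in>{1..n}. Gam n K \<phi> 1 2 m) = real n * Gam n K \<phi> 1 2 3 + (Gam n K \<phi> 1 2 1 - Gam n K \<phi> 1 2 3) + (Gam n K \<phi> 1 2 2 - Gam n K \<phi> 1 2 3)"
    using Gam_sumM[of n 1 2 "{1..n}" K \<phi>] assms by simp
  moreover have "(\<Sum>m\<in>{1..n}. Gam n K \<phi> 1 2 m) = (\<Sum>p\<in>{p. p permutes {1..n}}. \<Sum>m\<in>{1..n}. K (p 1) (p 2) * \<phi> (p m))"
    unfolding Gam_def by (rule sum.swap)
  moreover have "\<dots> = (\<Sum>p\<in>{p. p permutes {1..n}}. K (p 1) (p 2) * (\<Sum>m\<in>{1..n}. \<phi> (p m)))"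
    by (simp add: sum_distrib_left)
  moreover have "\<dots> = (\<Sum>p\<in>{p. p permutes {1..n}}. K (p 1) (p 2) * (\<Sum>a\<in>{1..n}. \<phi> a))"
    by (rule sum.cong) (auto simp: sum_perm_image)
  ultimately show ?thesis by (simp add: sum_distrib_right)
qed

lemma single_total:
  shows "real n * (\<Sum>p\<in>{p. p permutes {1..n}}. \<phi> (p 1)) = fact n * (\<Sum>a\<in>{1..n}. \<phi> a)"
proof -
  have "(\<Sum>m\<in>{1..n}. \<Sum>p\<in>{p. p permutes {1..n}}. \<phi> (p m)) = (\<Sum>m\<in>{1..n}. \<Sum>p\<in>{p. p permutes {1..n}}. \<phi> (p 1))"
    by (rule sum.cong[OF refl], rule sum_perm_single)
  moreover have "(\<Sum>m\<in>{1..n}. \<Sum>p\<in>{p. p permutes {1..n}}. \<phi> (p m)) = (\<Sum>p\<in>{p. p permutes {1..n}}. \<Sum>a\<in>{1..n}. \<phi> a)"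
    by (subst sum.swap) (rule sum.cong, auto simp: sum_perm_image)
  ultimately show ?thesis using cardP[of n] by simp
qed




definition Aset :: "nat set \<Rightarrow> (nat \<Rightarrow> nat \<Rightarrow> real) \<Rightarrow> (nat \<Rightarrow> nat) \<Rightarrow> real" where
  "Aset T K p = (\<Sum>i\<in>T. \<Sum>j\<in>T-{i}. K (p i) (p j))"

lemma sum_if_in: "finite S \<Longrightarrow> B \<subseteq> S \<Longrightarrow> (\<Sum>j\<in>S. if j \<in> B then f j else 0) = sum f B"
  by (simp add: sum.inter_restrict[symmetric] Int_absorb1 inf.absorb2)

lemma pair_to_square:
  assumes "finite S" "A \<subseteq> S"
  shows "(\<Sum>i\<in>A. \<Sum>j\<in>A-{i}. f i j) = (\<Sum>i\<in>S. \<Sum>j\<in>S. if i\<in>A \<and> j\<in>A \<and> i\<noteq>j then f i j else 0)"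
proof -
  have "(\<Sum>j\<in>S. if i\<in>A \<and> j\<in>A \<and> i\<noteq>j then f i j else 0) = (if i\<in>A then (\<Sum>j\<in>A-{i}. f i j) else 0)" for i
  proof (cases "i\<in>A")
    case True
    have "(\<Sum>j\<in>S. if i\<in>A \<and> j\<in>A \<and> i\<noteq>j then f i j else 0) = (\<Sum>j\<in>S. if j\<in>A-{i} then f i j else 0)"
      using True by (intro sum.cong) auto
    also have "\<dots> = (\<Sum>j\<in>A-{i}. f i j)" using assms by (intro sum_if_in) auto
    finally show ?thesis using True by simp
  qed simp
  then have "(\<Sum>i\<in>S. \<Sum>j\<in>S. if i\<in>A \<and> j\<in>A \<and> i\<noteq>j then f i j else 0)
      = (\<Sum>i\<in>S. if i\<in>A then (\<Sum>j\<in>A-{i}. f i j) else 0)" by simp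
  also have "\<dots> = (\<Sum>i\<in>A. \<Sum>j\<in>A-{i}. f i j)" by (rule sum_if_in[OF assms])
  finally show ?thesis by simp
qed

lemma restrict_pairs:
  assumes "finite S" "T = {x\<in>S. Pr x}"
  shows "(\<Sum>i\<in>S. \<Sum>j\<in>S-{i}. if Pr i \<and> Pr j then X i j else 0) = (\<Sum>i\<in>T. \<Sum>j\<in>T-{i}. X i j)"
proof -
  have T: "T \<subseteq> S" using assms by auto
  have "(\<Sum>i\<in>S. \<Sum>j\<in>S-{i}. if Pr i \<and> Pr j then X i j else 0)
     = (\<Sum>i\<in>S. \<Sum>j\<in>S. if i\<in>S \<and> j\<in>S \<and> i\<noteq>j then (if Pr i \<and> Pr j then X i j else 0) else 0)"
    by (rule pair_to_square[OF assms(1)]) simp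
  also have "\<dots> = (\<Sum>i\<in>S. \<Sum>j\<in>S. if i\<in>T \<and> j\<in>T \<and> i\<noteq>j then X i j else 0)"
    using assms(2) by (intro sum.cong) auto
  also have "\<dots> = (\<Sum>i\<in>T. \<Sum>j\<in>T-{i}. X i j)"
    by (rule pair_to_square[OF assms(1) T, symmetric])
  finally show ?thesis .
qed

lemma alpha_eq:
  assumes "t \<le> n"
  shows "alpha n K t p = 1 / (real t * (real t - 1)) * Aset {1..t} K p"
proof -
  have "{x\<in>{1..n}. x \<le> t} = {1..t}" using assms by auto
  then show ?thesis unfolding alpha_def Aset_def
    using restrict_pairs[of "{1..n}" "{1..t}" "\<lambda>i. i \<le> t" "\<lambda>i j. K (p i) (p j)"] by simp
qed

lemma beta_eq:
  assumes "t \<le> n"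
  shows "beta n K t p = 1 / ((real n - real t) * (real n - real t - 1)) * Aset {Suc t..n} K p"
proof -
  have "{x\<in>{1..n}. t < x} = {Suc t..n}" using assms by auto
  then show ?thesis unfolding beta_def Aset_def
    using restrict_pairs[of "{1..n}" "{Suc t..n}" "\<lambda>i. t < i" "\<lambda>i j. K (p i) (p j)"] by simp
qed

lemma row_sum:
  assumes "finite S" "T \<subseteq> S"
  shows "(\<Sum>m\<in>T. \<Sum>j\<in>S-{m}. Q m j) = (\<Sum>i\<in>S. \<Sum>j\<in>S. if i\<in>T then (if i \<noteq> j then Q i j else 0) else 0)"
proof -
  have "(\<Sum>j\<in>S. if i \<noteq> j then Q i j else 0) = (\<Sum>j\<in>S-{i}. Q i j)" for i
  proof -
    have "(\<Sum>j\<in>S. if i \<noteq> j then Q i j else 0) = (\<Sum>j\<in>S. if j \<in> S-{i} then Q i j else 0)"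
      by (intro sum.cong) auto
    also have "\<dots> = (\<Sum>j\<in>S-{i}. Q i j)" using assms by (intro sum_if_in) auto
    finally show ?thesis .
  qed
  then have "(\<Sum>i\<in>S. \<Sum>j\<in>S. if i\<in>T then (if i \<noteq> j then Q i j else 0) else 0)
     = (\<Sum>i\<in>S. if i\<in>T then (\<Sum>j\<in>S-{i}. Q i j) else 0)"
    by (intro sum.cong) auto
  also have "\<dots> = (\<Sum>m\<in>T. \<Sum>j\<in>S-{m}. Q m j)" by (rule sum_if_in[OF assms])
  finally show ?thesis by simp
qed

lemma lin_identity:
  fixes Q :: "'a \<Rightarrow> 'a \<Rightarrow> real"
  assumes "finite S" "T \<subseteq> S"
  shows "(\<Sum>i\<in>T. \<Sum>j\<in>T-{i}. Q i j) - (\<Sum>i\<in>S-T. \<Sum>j\<in>(S-T)-{i}. Q i j)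
       = (\<Sum>m\<in>T. \<Sum>j\<in>S-{m}. Q m j + Q j m) - (\<Sum>i\<in>S. \<Sum>j\<in>S-{i}. Q i j)"
proof -
  define I where "I i j = (if i \<noteq> j then Q i j else 0)" for i j
  have 1: "(\<Sum>i\<in>T. \<Sum>j\<in>T-{i}. Q i j) = (\<Sum>i\<in>S. \<Sum>j\<in>S. if i\<in>T \<and> j\<in>T then I i j else 0)"
    unfolding pair_to_square[OF assms] I_def by (intro sum.cong) auto
  have 2: "(\<Sum>i\<in>S-T. \<Sum>j\<in>(S-T)-{i}. Q i j) = (\<Sum>i\<in>S. \<Sum>j\<in>S. if i\<in>S-T \<and> j\<in>S-T then I i j else 0)"
    unfolding pair_to_square[OF assms(1) Diff_subset] I_def by (intro sum.cong) auto
  have 3: "(\<Sum>i\<in>S. \<Sum>j\<in>S-{i}. Q i j) = (\<Sum>i\<in>S. \<Sum>j\<in>S. I i j)"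
    unfolding row_sum[OF assms(1) order_refl] I_def by (intro sum.cong) auto
  have 4: "(\<Sum>m\<in>T. \<Sum>j\<in>S-{m}. Q m j) = (\<Sum>i\<in>S. \<Sum>j\<in>S. if i\<in>T then I i j else 0)"
    unfolding row_sum[OF assms] I_def by simp
  have 5: "(\<Sum>m\<in>T. \<Sum>j\<in>S-{m}. Q j m) = (\<Sum>i\<in>S. \<Sum>j\<in>S. if j\<in>T then I i j else 0)"
  proof -
    have "(\<Sum>m\<in>T. \<Sum>j\<in>S-{m}. Q j m) = (\<Sum>m\<in>S. \<Sum>j\<in>S. if m\<in>T then I j m else 0)"
      unfolding row_sum[OF assms, of "\<lambda>a b. Q b a"] I_def by (intro sum.cong) auto
    also have "\<dots> = (\<Sum>i\<in>S. \<Sum>j\<in>S. if j\<in>T then I i j else 0)"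
      by (rule sum.swap)
    finally show ?thesis .
  qed
  have 6: "(\<Sum>i\<in>S. \<Sum>j\<in>S. if i\<in>T \<and> j\<in>T then I i j else 0)
     = (\<Sum>i\<in>S. \<Sum>j\<in>S. ((if i\<in>T then I i j else 0) + (if j\<in>T then I i j else 0) - I i j)
           + (if i\<in>S-T \<and> j\<in>S-T then I i j else 0))"
    by (intro sum.cong) auto
  have "(\<Sum>m\<in>T. \<Sum>j\<in>S-{m}. Q m j + Q j m) = (\<Sum>m\<in>T. \<Sum>j\<in>S-{m}. Q m j) + (\<Sum>m\<in>T. \<Sum>j\<in>S-{m}. Q j m)"
    by (simp add: sum.distrib)
  then show ?thesis unfolding 1 2 3 4 5 6
    by (simp add: sum.distrib sum_subtractf)
qed

lemma reindex_row:
  assumes "p permutes S" "m \<in> S"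
  shows "(\<Sum>j\<in>S-{m}. g (p j)) = (\<Sum>b\<in>S-{p m}. g b)"
proof -
  have ip: "inj p" using permutes_inj[OF assms(1)] .
  then have im: "p ` (S - {m}) = S - {p m}" using permutes_image[OF assms(1)] by (simp add: image_set_diff)
  have "sum g (p ` (S-{m})) = sum (g \<circ> p) (S-{m})"
    by (rule sum.reindex) (use ip in \<open>auto intro: inj_on_subset\<close>)
  then show ?thesis unfolding im by simp
qed

lemma swap3:
  "(\<Sum>p\<in>P. \<Sum>i\<in>T. \<Sum>j\<in>J i. f p i j) = (\<Sum>i\<in>T. \<Sum>j\<in>J i. \<Sum>p\<in>P. f p i j)"
  by (subst sum.swap) (rule sum.cong[OF refl], rule sum.swap)

lemma swap4:
  "(\<Sum>p\<in>P. \<Sum>i\<in>T. \<Sum>j\<in>J i. \<Sum>m\<in>M. f p i j m) = (\<Sum>i\<in>T. \<Sum>j\<in>J i. \<Sum>m\<in>M. \<Sum>p\<in>P. f p i j m)"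
  by (subst swap3) (intro sum.cong refl, rule sum.swap)

lemma pair_const:
  assumes "finite T"
  shows "(\<Sum>i\<in>T. \<Sum>j\<in>T-{i}. (c::real)) = real (card T) * (real (card T) - 1) * c"
proof -
  have "(\<Sum>i\<in>T. \<Sum>j\<in>T-{i}. c) = (\<Sum>i\<in>T. (real (card T) - 1) * c)"
  proof (rule sum.cong[OF refl])
    fix i assume "i \<in> T"
    then have "card T \<ge> 1" using assms card_0_eq by (metis One_nat_def Suc_leI empty_iff neq0_conv)
    then show "(\<Sum>j\<in>T-{i}. c) = (real (card T) - 1) * c"
      using \<open>i \<in> T\<close> assms by (simp add: card_Diff_singleton of_nat_diff)
  qed
  then show ?thesis by simp
qed

lemma sumP_Aset:
  assumes "2 \<le> n" "T \<subseteq> {1..n}"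
  shows "(\<Sum>p\<in>{p. p permutes {1..n}}. Aset T K p)
     = real (card T) * (real (card T) - 1) * (\<Sum>p\<in>{p. p permutes {1..n}}. K (p 1) (p 2))"
proof -
  have fT: "finite T" using assms finite_subset by blast
  have "(\<Sum>p\<in>{p. p permutes {1..n}}. Aset T K p) = (\<Sum>i\<in>T. \<Sum>j\<in>T-{i}. \<Sum>p\<in>{p. p permutes {1..n}}. K (p i) (p j))"
    unfolding Aset_def by (rule swap3)
  also have "\<dots> = (\<Sum>i\<in>T. \<Sum>j\<in>T-{i}. \<Sum>p\<in>{p. p permutes {1..n}}. K (p 1) (p 2))"
    using assms by (intro sum.cong refl sum_perm_pair) auto
  finally show ?thesis using pair_const[OF fT] by simp
qed

lemma sumP_AsetY:
  assumes "3 \<le> n" "T \<subseteq> {1..n}" "M \<subseteq> {1..n}"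
  shows "(\<Sum>p\<in>{p. p permutes {1..n}}. Aset T K p * (\<Sum>m\<in>M. \<phi> (p m)))
     = (\<Sum>i\<in>T. \<Sum>j\<in>T-{i}. real (card M) * Gam n K \<phi> 1 2 3
     + (if i \<in> M then Gam n K \<phi> 1 2 1 - Gam n K \<phi> 1 2 3 else 0)
     + (if j \<in> M then Gam n K \<phi> 1 2 2 - Gam n K \<phi> 1 2 3 else 0))"
proof -
  have "(\<Sum>p\<in>{p. p permutes {1..n}}. Aset T K p * (\<Sum>m\<in>M. \<phi> (p m)))
      = (\<Sum>p\<in>{p. p permutes {1..n}}. \<Sum>i\<in>T. \<Sum>j\<in>T-{i}. \<Sum>m\<in>M. K (p i) (p j) * \<phi> (p m))"
  proof (rule sum.cong[OF refl])
    fix p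
    show "Aset T K p * (\<Sum>m\<in>M. \<phi> (p m)) = (\<Sum>i\<in>T. \<Sum>j\<in>T-{i}. \<Sum>m\<in>M. K (p i) (p j) * \<phi> (p m))"
      unfolding Aset_def sum_distrib_right by (simp add: sum_distrib_left)
  qed
  also have "\<dots> = (\<Sum>i\<in>T. \<Sum>j\<in>T-{i}. \<Sum>m\<in>M. Gam n K \<phi> i j m)"
    unfolding Gam_def by (rule swap4)
  also have "\<dots> = (\<Sum>i\<in>T. \<Sum>j\<in>T-{i}. real (card M) * Gam n K \<phi> 1 2 3
     + (if i \<in> M then Gam n K \<phi> 1 2 1 - Gam n K \<phi> 1 2 3 else 0)
     + (if j \<in> M then Gam n K \<phi> 1 2 2 - Gam n K \<phi> 1 2 3 else 0))"
    using assms by (intro sum.cong refl Gam_sumM) auto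
  finally show ?thesis .
qed




lemma w_gen: "(x::real) \<noteq> 0 \<Longrightarrow> x - 1 \<noteq> 0 \<Longrightarrow> m \<noteq> 0 \<Longrightarrow> x / m * (1 / (x * (x - 1)) * A) = A / (m * (x - 1))"
  by (simp add: field_simps)

lemma d_gen0: "(y::real) \<noteq> 0 \<Longrightarrow> y / m * (1 / y * A) = A / m"
  by (cases "m = 0") (simp_all add: field_simps)

lemma d_gen: "(x::real) \<noteq> 0 \<Longrightarrow> x - 1 \<noteq> 0 \<Longrightarrow> x * (x - 1) / m * (1 / (x * (x - 1)) * A) = A / m"
  by (rule d_gen0) simp

lemma c_gen: "(x::real) - 1 \<noteq> 0 \<Longrightarrow> x * (x - 1) * E / (m * (x - 1)) = x * E / m"
  by (cases "m = 0") (simp_all add: field_simps)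

lemma key_cov:
  fixes K L :: "nat \<Rightarrow> nat \<Rightarrow> real" and n t :: nat
  assumes t2: "2 \<le> t" and tn: "t + 2 \<le> n"
  shows "pcov n (Wstat n K t) (Dstat n L t) = 0"
proof -
  define P where "P = {p. p permutes {1..n}}"
  define T where "T = {1..t}"
  define U where "U = {Suc t..n}"
  have tle: "t \<le> n" using tn by simp
  have n3: "3 \<le> n" using assms by simp
  have TS: "T \<subseteq> {1..n}" "U \<subseteq> {1..n}" and UT: "U = {1..n} - T" using tn by (auto simp: T_def U_def)
  have cT: "card T = t" "real (card U) = real n - real t" using tle by (simp_all add: T_def U_def of_nat_diff)
  define \<phi> where "\<phi> a = (\<Sum>b\<in>{1..n}-{a}. L a b + L b a)" for a
  define r where "r a = (\<Sum>b\<in>{1..n}-{a}. L a b)" for a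
  define SL where "SL = (\<Sum>a\<in>{1..n}. r a)"
  define Y where "Y p = (\<Sum>m\<in>T. \<phi> (p m))" for p :: "nat \<Rightarrow> nat"
  define N where "N = (fact n :: real)"
  define E0 where "E0 = (\<Sum>p\<in>P. K (p 1) (p 2))"
  define G1 where "G1 = Gam n K \<phi> 1 2 1"
  define G2 where "G2 = Gam n K \<phi> 1 2 2"
  define G3 where "G3 = Gam n K \<phi> 1 2 3"
  define \<Phi> where "\<Phi> = (\<Sum>a\<in>{1..n}. \<phi> a)"
  define F1 where "F1 = (\<Sum>p\<in>P. \<phi> (p 1))"
  have nreal: "real n \<ge> real t + 2" "real t \<ge> 2" using assms by simp_all
  have Npos: "N > 0" unfolding N_def by simp
  have nz: "real t \<noteq> 0" "real t - 1 \<noteq> 0" "real n - real t \<noteq> 0" "real n - real t - 1 \<noteq> 0" "real n \<noteq> 0"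
    using nreal by auto
  have w1: "real t / real n * (1 / (real t * (real t - 1)) * A) = A / (real n * (real t - 1))" for A
    by (rule w_gen) (use nz in auto)
  have w2: "(real n - real t) / real n * (1 / ((real n - real t) * (real n - real t - 1)) * A) = A / (real n * (real n - real t - 1))" for A
    using nz by (intro w_gen) auto
  have d1: "real t * (real t - 1) / (real n * (real n - 1)) * (1 / (real t * (real t - 1)) * A) = A / (real n * (real n - 1))" for A
    using nz by (intro d_gen) auto
  have d2: "(real n - real t) * (real n - real t - 1) / (real n * (real n - 1)) * (1 / ((real n - real t) * (real n - real t - 1)) * A) = A / (real n * (real n - 1))" for A
    using nz by (intro d_gen) auto
  have W: "Wstat n K t p = Aset T K p / (real n * (real t - 1)) + Aset U K p / (real n * (real n - real t - 1))" for p
    unfolding Wstat_def alpha_eq[OF tle] beta_eq[OF tle] T_def U_def w1 w2 ..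
  have D: "Dstat n L t p = (1 / (real n * (real n - 1))) * Y p - SL / (real n * (real n - 1))"
    if p: "p permutes {1..n}" for p
  proof -
    have "Dstat n L t p = (Aset T L p - Aset U L p) / (real n * (real n - 1))"
      unfolding Dstat_def alpha_eq[OF tle] beta_eq[OF tle] T_def U_def d1 d2 by (simp add: diff_divide_distrib)
    also have "Aset T L p - Aset U L p = (\<Sum>m\<in>T. \<Sum>j\<in>{1..n}-{m}. L (p m) (p j) + L (p j) (p m))
        - (\<Sum>i\<in>{1..n}. \<Sum>j\<in>{1..n}-{i}. L (p i) (p j))"
      unfolding Aset_def UT by (rule lin_identity) (use TS in auto)
    also have "(\<Sum>m\<in>T. \<Sum>j\<in>{1..n}-{m}. L (p m) (p j) + L (p j) (p m)) = Y p"
      unfolding Y_def \<phi>_def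
    proof (rule sum.cong[OF refl])
      fix m assume "m \<in> T"
      then show "(\<Sum>j\<in>{1..n}-{m}. L (p m) (p j) + L (p j) (p m)) = (\<Sum>b\<in>{1..n}-{p m}. L (p m) b + L b (p m))"
        using reindex_row[OF p, of m "\<lambda>b. L (p m) b + L b (p m)"] TS by auto
    qed
    also have "(\<Sum>i\<in>{1..n}. \<Sum>j\<in>{1..n}-{i}. L (p i) (p j)) = (\<Sum>i\<in>{1..n}. r (p i))"
      unfolding r_def
    proof (rule sum.cong[OF refl])
      fix i assume "i \<in> {1..n}"
      then show "(\<Sum>j\<in>{1..n}-{i}. L (p i) (p j)) = (\<Sum>b\<in>{1..n}-{p i}. L (p i) b)"
        using reindex_row[OF p, of i "\<lambda>b. L (p i) b"] by auto
    qed
    also have "\<dots> = SL" unfolding SL_def by (rule sum_perm_image[OF p])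
    finally show ?thesis by (simp add: diff_divide_distrib)
  qed
  have SA: "(\<Sum>p\<in>P. Aset T K p) = real t * (real t - 1) * E0"
    using sumP_Aset[of n T K] TS n3 cT unfolding P_def E0_def by simp
  have SB: "(\<Sum>p\<in>P. Aset U K p) = (real n - real t) * (real n - real t - 1) * E0"
    using sumP_Aset[of n U K] TS n3 cT unfolding P_def E0_def by simp
  have SAY: "(\<Sum>p\<in>P. Aset T K p * Y p) = real t * (real t - 1) * (real t * G3 + (G1 - G3) + (G2 - G3))"
  proof -
    have "(\<Sum>p\<in>P. Aset T K p * Y p) = (\<Sum>i\<in>T. \<Sum>j\<in>T-{i}. real t * G3 + (G1 - G3) + (G2 - G3))"
      unfolding P_def Y_def sumP_AsetY[OF n3 TS(1) TS(1)] G1_def G2_def G3_def cT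
      by (intro sum.cong refl) auto
    then show ?thesis using pair_const[of T] cT by (simp add: T_def)
  qed
  have SBY: "(\<Sum>p\<in>P. Aset U K p * Y p) = (real n - real t) * (real n - real t - 1) * (real t * G3)"
  proof -
    have "(\<Sum>p\<in>P. Aset U K p * Y p) = (\<Sum>i\<in>U. \<Sum>j\<in>U-{i}. real t * G3)"
      unfolding P_def Y_def sumP_AsetY[OF n3 TS(2) TS(1)] G1_def G2_def G3_def cT
      by (intro sum.cong refl) (auto simp: T_def U_def)
    then show ?thesis using pair_const[of U] cT by (simp add: U_def)
  qed
  have SY: "(\<Sum>p\<in>P. Y p) = real t * F1"
  proof -
    have "(\<Sum>p\<in>P. Y p) = (\<Sum>m\<in>T. \<Sum>p\<in>P. \<phi> (p m))" unfolding Y_def by (rule sum.swap)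
    also have "\<dots> = (\<Sum>m\<in>T. F1)" unfolding F1_def P_def
      using TS by (intro sum.cong refl sum_perm_single) auto
    finally show ?thesis using cT by simp
  qed
  have C1: "real n * G3 + (G1 - G3) + (G2 - G3) = E0 * \<Phi>"
    using Gam_constraint[OF n3, of K \<phi>] unfolding G1_def G2_def G3_def E0_def \<Phi>_def P_def .
  have C2: "real n * F1 = N * \<Phi>"
    using single_total[of n \<phi>] unfolding F1_def N_def \<Phi>_def P_def .
  have pW: "pexp n (Wstat n K t) = (real t * E0 / real n + (real n - real t) * E0 / real n) / N"
  proof -
    have "pexp n (Wstat n K t) = ((\<Sum>p\<in>P. Aset T K p) / (real n * (real t - 1)) + (\<Sum>p\<in>P. Aset U K p) / (real n * (real n - real t - 1))) / N"
      unfolding pexp_def W P_def N_def by (simp add: sum.distrib sum_divide_distrib)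
    also have "\<dots> = (real t * E0 / real n + (real n - real t) * E0 / real n) / N"
      unfolding SA SB c_gen[OF nz(2)] c_gen[OF nz(4)] ..
    finally show ?thesis .
  qed
  have pY: "pexp n Y = real t * F1 / N"
    unfolding pexp_def using SY unfolding P_def N_def by simp
  have pWY: "pexp n (\<lambda>p. Wstat n K t p * Y p) = (real t * (real t * G3 + (G1 - G3) + (G2 - G3)) / real n + (real n - real t) * (real t * G3) / real n) / N"
  proof -
    have "pexp n (\<lambda>p. Wstat n K t p * Y p) = ((\<Sum>p\<in>P. Aset T K p * Y p) / (real n * (real t - 1)) + (\<Sum>p\<in>P. Aset U K p * Y p) / (real n * (real n - real t - 1))) / N"
      unfolding pexp_def W P_def N_def by (simp add: distrib_right sum.distrib sum_divide_distrib)
    also have "\<dots> = (real t * (real t * G3 + (G1 - G3) + (G2 - G3)) / real n + (real n - real t) * (real t * G3) / real n) / N"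
      unfolding SAY SBY c_gen[OF nz(2)] c_gen[OF nz(4)] ..
    finally show ?thesis .
  qed
  have WY0: "pcov n (Wstat n K t) Y = 0"
  proof -
    have e1: "real t * (real t * G3 + (G1 - G3) + (G2 - G3)) / real n + (real n - real t) * (real t * G3) / real n
        = real t * (real n * G3 + (G1 - G3) + (G2 - G3)) / real n"
      using nreal by (simp add: field_simps)
    have e2: "real t * E0 / real n + (real n - real t) * E0 / real n = E0"
      using nreal by (simp add: field_simps)
    have e3: "F1 = N * \<Phi> / real n" using C2 nreal by (simp add: field_simps)
    show ?thesis unfolding pcov_alt pWY pW pY e1 e2 C1 e3 using Npos nreal by (simp add: field_simps)
  qed
  have "pcov n (Wstat n K t) (Dstat n L t)
      = pcov n (Wstat n K t) (\<lambda>p. (1 / (real n * (real n - 1))) * Y p - SL / (real n * (real n - 1)))"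
    by (rule pcov_cong) (auto simp: D)
  also have "\<dots> = (1 / (real n * (real n - 1))) * pcov n (Wstat n K t) Y"
    unfolding pcov_diff_right pcov_scale_right pcov_const_right by simp
  finally show ?thesis using WY0 by simp
qed




definition v4 :: "real \<Rightarrow> real \<Rightarrow> real \<Rightarrow> real \<Rightarrow> real^4" where
  "v4 a b c d = (\<chi> k. if k = 0 then a else if k = 1 then b else if k = 2 then c else d)"

lemma v4_nth [simp]: "v4 a b c d $ 0 = a" "v4 a b c d $ 1 = b" "v4 a b c d $ 2 = c" "v4 a b c d $ 3 = d"
  by (simp_all add: v4_def)

lemma matrix_inv_eq:
  fixes A B :: "real^'n^'n"
  assumes "A ** B = mat 1" "B ** A = mat 1"
  shows "matrix_inv A = B"
proof -
  have ex: "\<exists>A'. A ** A' = mat 1 \<and> A' ** A = mat 1" using assms by blast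
  have "A ** matrix_inv A = mat 1 \<and> matrix_inv A ** A = mat 1"
    unfolding matrix_inv_def by (rule someI_ex[OF ex])
  then have "matrix_inv A = matrix_inv A ** (A ** B)" using assms by (simp add: matrix_mul_rid)
  also have "\<dots> = (matrix_inv A ** A) ** B" by (simp add: matrix_mul_assoc)
  also have "\<dots> = B" using \<open>A ** matrix_inv A = mat 1 \<and> matrix_inv A ** A = mat 1\<close> by (simp add: matrix_mul_lid)
  finally show ?thesis .
qed

lemma pcov_lc:
  "pcov n (\<lambda>p. \<Sum>k\<in>UNIV. c$k * X k p) (\<lambda>p. \<Sum>l\<in>UNIV. d$l * X l p)
    = (\<Sum>k\<in>UNIV. \<Sum>l\<in>UNIV. c$k * d$l * pcov n (X k) (X l))"
  unfolding pcov_sum_left pcov_sum_right by (simp add: sum_distrib_left mult.assoc)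

lemma pvar_lc_pos:
  fixes X :: "'k::finite \<Rightarrow> perm_stat" and c :: "real^'k"
  assumes inv: "invertible (\<chi> i j. pcov n (X i) (X j))" and c: "c \<noteq> 0"
  shows "pvar n (\<lambda>p. \<Sum>k\<in>UNIV. c$k * X k p) > 0"
proof (rule ccontr)
  assume "\<not> ?thesis"
  then have z: "pvar n (\<lambda>p. \<Sum>k\<in>UNIV. c$k * X k p) = 0" using pvar_nonneg[of n "\<lambda>p. \<Sum>k\<in>UNIV. c$k * X k p"] by linarith
  have "(\<chi> i j. pcov n (X i) (X j)) *v c = 0"
  proof (rule vec_eq_iff[THEN iffD2], rule allI)
    fix l
    have "((\<chi> i j. pcov n (X i) (X j)) *v c) $ l = (\<Sum>k\<in>UNIV. pcov n (X l) (X k) * c$k)"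
      by (simp add: matrix_vector_mult_def)
    also have "\<dots> = (\<Sum>k\<in>UNIV. c$k * pcov n (X k) (X l))"
    proof (rule sum.cong[OF refl])
      fix k show "pcov n (X l) (X k) * c$k = c$k * pcov n (X k) (X l)"
        using pcov_sym[of n "X l" "X k"] by simp
    qed
    also have "\<dots> = pcov n (\<lambda>p. \<Sum>k\<in>UNIV. c$k * X k p) (X l)"
      by (rule pcov_sum_left[symmetric])
    also have "\<dots> = 0" using pvar_zero_cov[OF z] .
    finally show "((\<chi> i j. pcov n (X i) (X j)) *v c) $ l = 0 $ l" by simp
  qed
  then have "(\<chi> i j. pcov n (X i) (X j)) *v c = (\<chi> i j. pcov n (X i) (X j)) *v 0" by simp
  then have "c = 0" using inj_matrix_vector_mult[OF inv] by (rule injD[rotated])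
  with c show False by simp
qed





lemma avec_simps: "avec n K1 K2 t 0 = alpha n K1 t" "avec n K1 K2 t 1 = beta n K1 t"
   "avec n K1 K2 t 2 = alpha n K2 t" "avec n K1 K2 t 3 = beta n K2 t"
  unfolding avec_def by simp_all

lemma cases4: "(r::4) = 0 \<or> r = 1 \<or> r = 2 \<or> r = 3"
  using U4 by auto

lemma diag_inv:
  fixes lam :: "4 \<Rightarrow> real"
  assumes "\<And>r. lam r \<noteq> 0"
  shows "(\<chi> r s. if r = s then lam r else 0) ** (\<chi> r s. if r = s then 1 / lam r else 0) = (mat 1 :: real^4^4)"
proof -
  have "(\<Sum>k\<in>UNIV. (if r = k then lam r else 0) * (if k = s then 1 / lam k else 0)) = (if r = s then 1 else 0)" for r s :: 4
  proof -
    have "(\<Sum>k\<in>UNIV. (if r = k then lam r else 0) * (if k = s then 1 / lam k else 0))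
        = (\<Sum>k\<in>UNIV. if k = r then lam r * (if k = s then 1 / lam k else 0) else 0)"
      by (intro sum.cong) auto
    also have "\<dots> = lam r * (if r = s then 1 / lam r else 0)" by (simp add: sum.delta)
    finally show ?thesis using assms[of r] by auto
  qed
  then show ?thesis by (simp add: matrix_matrix_mult_def mat_def vec_eq_iff)
qed

theorem theorem1:
  fixes K1 K2 :: "nat \<Rightarrow> nat \<Rightarrow> real" and n t :: nat
    and c1 c2 :: real and WDiff DDiff WSum DSum :: perm_stat
  assumes "n \<ge> 4" and "2 \<le> t" and "t \<le> n - 2"
    and "\<forall>i\<in>{1..n}. \<forall>j\<in>{1..n}. K1 i j = K1 j i"
    and "\<forall>i\<in>{1..n}. \<forall>j\<in>{1..n}. K2 i j = K2 j i"
    and "invertible (Sigma_mat n K1 K2 t)"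
    and "pvar n (Wstat n K1 t) \<noteq> pcov n (Wstat n K1 t) (Wstat n K2 t)"
    and "pvar n (Dstat n K1 t) \<noteq> pcov n (Dstat n K1 t) (Dstat n K2 t)"
  defines "c1 \<equiv> (pvar n (Wstat n K2 t) - pcov n (Wstat n K1 t) (Wstat n K2 t))
                 / (pvar n (Wstat n K1 t) - pcov n (Wstat n K1 t) (Wstat n K2 t))"
    and "c2 \<equiv> (pvar n (Dstat n K2 t) - pcov n (Dstat n K1 t) (Dstat n K2 t))
                 / (pvar n (Dstat n K1 t) - pcov n (Dstat n K1 t) (Dstat n K2 t))"
    and "WDiff \<equiv> (\<lambda>p. Wstat n K1 t p - Wstat n K2 t p)"
    and "DDiff \<equiv> (\<lambda>p. Dstat n K1 t p - Dstat n K2 t p)"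
    and "WSum \<equiv> (\<lambda>p. c1 * Wstat n K1 t p + Wstat n K2 t p)"
    and "DSum \<equiv> (\<lambda>p. c2 * Dstat n K1 t p + Dstat n K2 t p)"
  shows "pvar n WDiff > 0 \<and> pvar n DDiff > 0 \<and> pvar n WSum > 0 \<and> pvar n DSum > 0
    \<and> pcov n (zstd n WDiff) (zstd n DDiff) = 0
    \<and> pcov n (zstd n WDiff) (zstd n WSum) = 0
    \<and> pcov n (zstd n WDiff) (zstd n DSum) = 0
    \<and> pcov n (zstd n DDiff) (zstd n WSum) = 0
    \<and> pcov n (zstd n DDiff) (zstd n DSum) = 0
    \<and> pcov n (zstd n WSum) (zstd n DSum) = 0
    \<and> (\<forall>p. p permutes {1..n} \<longrightarrow>
         Sstat n K1 K2 t p = (zstd n WDiff p)\<^sup>2 + (zstd n DDiff p)\<^sup>2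
                            + (zstd n WSum p)\<^sup>2 + (zstd n DSum p)\<^sup>2)"
proof -
  note defs = assms(9-14)
  have tn: "t + 2 \<le> n" using assms(1,3) by simp
  define a where "a = avec n K1 K2 t"
  define Sig where "Sig = Sigma_mat n K1 K2 t"
  have Sig_eq: "Sig = (\<chi> i j. pcov n (a i) (a j))" unfolding Sig_def Sigma_mat_def a_def ..
  have inv: "invertible (\<chi> i j. pcov n (a i) (a j))" using assms(6) Sig_eq Sig_def by simp
  define W1 where "W1 = Wstat n K1 t"
  define W2 where "W2 = Wstat n K2 t"
  define D1 where "D1 = Dstat n K1 t"
  define D2 where "D2 = Dstat n K2 t"
  have k11: "pcov n W1 D1 = 0" unfolding W1_def D1_def using key_cov assms(2) tn by blast
  have k12: "pcov n W1 D2 = 0" unfolding W1_def D2_def using key_cov assms(2) tn by blast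
  have k21: "pcov n W2 D1 = 0" unfolding W2_def D1_def using key_cov assms(2) tn by blast
  have k22: "pcov n W2 D2 = 0" unfolding W2_def D2_def using key_cov assms(2) tn by blast
  have k11': "pcov n D1 W1 = 0" using k11 pcov_sym by metis
  have k12': "pcov n D2 W1 = 0" using k12 pcov_sym by metis
  have k21': "pcov n D1 W2 = 0" using k21 pcov_sym by metis
  have k22': "pcov n D2 W2 = 0" using k22 pcov_sym by metis
  have sW: "pcov n W2 W1 = pcov n W1 W2" by (rule pcov_sym)
  have sD: "pcov n D2 D1 = pcov n D1 D2" by (rule pcov_sym)
  have c1e: "c1 * (pcov n W1 W1 - pcov n W1 W2) = pcov n W2 W2 - pcov n W1 W2"
    using assms(7) unfolding defs(1) W1_def W2_def pvar_def by simp
  have c2e: "c2 * (pcov n D1 D1 - pcov n D1 D2) = pcov n D2 D2 - pcov n D1 D2"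
    using assms(8) unfolding defs(2) D1_def D2_def pvar_def by simp
  have WD: "WDiff = (\<lambda>p. W1 p - W2 p)" unfolding defs W1_def W2_def ..
  have DD: "DDiff = (\<lambda>p. D1 p - D2 p)" unfolding defs D1_def D2_def ..
  have WS: "WSum = (\<lambda>p. c1 * W1 p + W2 p)" unfolding defs W1_def W2_def ..
  have DS: "DSum = (\<lambda>p. c2 * D1 p + D2 p)" unfolding defs D1_def D2_def ..
  have o1: "pcov n WDiff DDiff = 0"
    unfolding WD DD pcov_diff_left pcov_diff_right k11 k12 k21 k22 by simp
  have o2: "pcov n WDiff WSum = 0"
    unfolding WD WS pcov_diff_left pcov_add_right pcov_scale_right sW using c1e by (simp add: algebra_simps)
  have o3: "pcov n WDiff DSum = 0"
    unfolding WD DS pcov_diff_left pcov_add_right pcov_scale_right k11 k12 k21 k22 by simp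
  have o4: "pcov n DDiff WSum = 0"
    unfolding DD WS pcov_diff_left pcov_add_right pcov_scale_right k11' k12' k21' k22' by simp
  have o5: "pcov n DDiff DSum = 0"
    unfolding DD DS pcov_diff_left pcov_add_right pcov_scale_right sD using c2e by (simp add: algebra_simps)
  have o6: "pcov n WSum DSum = 0"
    unfolding WS DS pcov_add_left pcov_add_right pcov_scale_left pcov_scale_right k11 k12 k21 k22 by simp
  define wa where "wa = real t / real n"
  define wb where "wb = (real n - real t) / real n"
  define da where "da = real t * (real t - 1) / (real n * (real n - 1))"
  define db where "db = (real n - real t) * (real n - real t - 1) / (real n * (real n - 1))"
  have nreal: "real n \<ge> real t + 2" "real t \<ge> 2" using assms(2) tn by simp_all
  have wa0: "wa \<noteq> 0" unfolding wa_def using nreal by simp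
  have da0: "da \<noteq> 0" unfolding da_def using nreal by simp
  define M :: "real^4^4" where "M = (\<chi> r. if r = 0 then v4 wa wb (-wa) (-wb) else if r = 1 then v4 da (-db) (-da) db
      else if r = 2 then v4 (c1*wa) (c1*wb) wa wb else v4 (c2*da) (-(c2*db)) da (-db))"
  define bs :: "4 \<Rightarrow> perm_stat" where "bs r = (if r = 0 then WDiff else if r = 1 then DDiff else if r = 2 then WSum else DSum)" for r
  have M_simps: "M $ 0 = v4 wa wb (-wa) (-wb)" "M $ 1 = v4 da (-db) (-da) db"
     "M $ 2 = v4 (c1*wa) (c1*wb) wa wb" "M $ 3 = v4 (c2*da) (-(c2*db)) da (-db)"
    unfolding M_def by simp_all
  have bs_simps: "bs 0 = WDiff" "bs 1 = DDiff" "bs 2 = WSum" "bs 3 = DSum" unfolding bs_def by simp_all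
  have a_simps: "a 0 = alpha n K1 t" "a 1 = beta n K1 t" "a 2 = alpha n K2 t" "a 3 = beta n K2 t"
    unfolding a_def by (simp_all add: avec_simps)
  have bs_lc: "bs r = (\<lambda>p. \<Sum>k\<in>UNIV. M$r$k * a k p)" for r
    using cases4[of r]
    by (elim disjE) (auto simp: fun_eq_iff bs_simps M_simps sum4 a_simps WD DD WS DS W1_def W2_def D1_def D2_def
        Wstat_def Dstat_def wa_def wb_def da_def db_def algebra_simps)
  have Mr0: "M $ r \<noteq> 0" for r
  proof -
    have "M $ r $ 0 \<noteq> 0 \<or> M $ r $ 2 \<noteq> 0"
      using cases4[of r] by (elim disjE) (auto simp: M_simps wa0 da0)
    then show ?thesis by auto
  qed
  define lam where "lam r = pvar n (bs r)" for r
  have lam_pos: "lam r > 0" for r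
    unfolding lam_def bs_lc using pvar_lc_pos[OF inv Mr0] .
  have pos: "pvar n WDiff > 0 \<and> pvar n DDiff > 0 \<and> pvar n WSum > 0 \<and> pvar n DSum > 0"
    using lam_pos[of 0] lam_pos[of 1] lam_pos[of 2] lam_pos[of 3] unfolding lam_def bs_simps by simp
  have zc: "pcov n (zstd n X) (zstd n Y) = 0" if "pcov n X Y = 0" for X Y
    using that by (simp add: pcov_zstd)
  have unc: "pcov n (zstd n WDiff) (zstd n DDiff) = 0
    \<and> pcov n (zstd n WDiff) (zstd n WSum) = 0
    \<and> pcov n (zstd n WDiff) (zstd n DSum) = 0
    \<and> pcov n (zstd n DDiff) (zstd n WSum) = 0
    \<and> pcov n (zstd n DDiff) (zstd n DSum) = 0
    \<and> pcov n (zstd n WSum) (zstd n DSum) = 0"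
    using zc o1 o2 o3 o4 o5 o6 by simp
  have bcov: "pcov n (bs r) (bs s) = (if r = s then lam r else 0)" for r s
  proof (cases "r = s")
    case True then show ?thesis unfolding lam_def pvar_def by simp
  next
    case False
    have o: "pcov n X Y = 0 \<Longrightarrow> pcov n Y X = 0" for X Y using pcov_sym by metis
    show ?thesis using False cases4[of r] cases4[of s] o1 o2 o3 o4 o5 o6 o[OF o1] o[OF o2] o[OF o3]
      o[OF o4] o[OF o5] o[OF o6]
      by (auto simp: bs_simps)
  qed
  have Lam: "M ** Sig ** transpose M = (\<chi> r s. if r = s then lam r else 0)"
  proof -
    have "(M ** Sig ** transpose M) $ r $ s = pcov n (bs r) (bs s)" for r s
    proof -
      have "(M ** Sig ** transpose M) $ r $ s = (\<Sum>l\<in>UNIV. (\<Sum>k\<in>UNIV. M$r$k * Sig$k$l) * M$s$l)"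
        by (simp add: matrix_matrix_mult_def transpose_def)
      also have "\<dots> = (\<Sum>l\<in>UNIV. \<Sum>k\<in>UNIV. M$r$k * M$s$l * Sig$k$l)"
        by (simp add: sum_distrib_left sum_distrib_right mult_ac)
      also have "\<dots> = (\<Sum>k\<in>UNIV. \<Sum>l\<in>UNIV. M$r$k * M$s$l * Sig$k$l)"
        by (rule sum.swap)
      also have "\<dots> = pcov n (bs r) (bs s)"
        unfolding bs_lc pcov_lc Sig_eq by simp
      finally show ?thesis .
    qed
    then show ?thesis using bcov by (simp add: vec_eq_iff)
  qed
  define Dinv :: "real^4^4" where "Dinv = (\<chi> r s. if r = s then 1 / lam r else 0)"
  have LD: "(\<chi> r s. if r = s then lam r else 0) ** Dinv = (mat 1 :: real^4^4)"
    unfolding Dinv_def by (rule diag_inv) (metis lam_pos less_irrefl)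
  define B where "B = transpose M ** Dinv ** M"
  have "M ** (Sig ** transpose M ** Dinv) = mat 1"
    using LD unfolding Lam[symmetric] by (simp add: matrix_mul_assoc)
  then have "(Sig ** transpose M ** Dinv) ** M = mat 1" by (simp add: matrix_left_right_inverse)
  then have SB: "Sig ** B = mat 1" unfolding B_def by (simp add: matrix_mul_assoc)
  then have BS: "B ** Sig = mat 1" by (simp add: matrix_left_right_inverse)
  have Binv: "matrix_inv Sig = B" by (rule matrix_inv_eq[OF SB BS])
  have pexp_bs: "pexp n (bs r) = (\<Sum>k\<in>UNIV. M$r$k * pexp n (a k))" for r
    unfolding bs_lc by (simp add: pexp_sumI pexp_scale)
  have Sform: "Sstat n K1 K2 t p = (zstd n WDiff p)\<^sup>2 + (zstd n DDiff p)\<^sup>2 + (zstd n WSum p)\<^sup>2 + (zstd n DSum p)\<^sup>2" for p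
  proof -
    define v :: "real^4" where "v = (\<chi> i. a i p - pexp n (a i))"
    define u where "u = M *v v"
    have u_nth: "u $ r = bs r p - pexp n (bs r)" for r
      unfolding u_def v_def pexp_bs by (simp add: matrix_vector_mult_def bs_lc right_diff_distrib sum_subtractf)
    have "Sstat n K1 K2 t p = v \<bullet> (B *v v)"
      unfolding Sstat_def Let_def v_def a_def Binv[unfolded Sig_def] ..
    also have "B *v v = transpose M *v (Dinv *v u)"
      unfolding B_def u_def by (simp add: matrix_vector_mul_assoc matrix_mul_assoc)
    also have "v \<bullet> (transpose M *v (Dinv *v u)) = (v v* transpose M) \<bullet> (Dinv *v u)"
      by (rule dot_lmul_matrix[symmetric])
    also have "\<dots> = u \<bullet> (Dinv *v u)"
      unfolding u_def vector_transpose_matrix ..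
    also have "\<dots> = (\<Sum>r\<in>UNIV. u$r * (u$r / lam r))"
    proof -
      have Du: "(Dinv *v u) $ r = u$r / lam r" for r
      proof -
        have "(Dinv *v u) $ r = (\<Sum>s\<in>UNIV. (if r = s then 1 / lam r else 0) * u$s)"
          unfolding Dinv_def by (simp add: matrix_vector_mult_def)
        also have "\<dots> = (\<Sum>s\<in>UNIV. if s = r then u$r / lam r else 0)" by (intro sum.cong) auto
        also have "\<dots> = u$r / lam r" by simp
        finally show ?thesis .
      qed
      show ?thesis unfolding inner_vec_def Du by simp
    qed
    also have "\<dots> = (\<Sum>r\<in>UNIV. (zstd n (bs r) p)\<^sup>2)"
    proof (rule sum.cong[OF refl])
      fix r
      have "(zstd n (bs r) p)\<^sup>2 = (u$r)\<^sup>2 / lam r"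
        unfolding zstd_def u_nth lam_def[symmetric] using lam_pos[of r]
        by (simp add: power_divide)
      then show "u$r * (u$r / lam r) = (zstd n (bs r) p)\<^sup>2" by (simp add: power2_eq_square)
    qed
    finally show ?thesis unfolding sum4 bs_simps by (simp add: add.assoc)
  qed
  show ?thesis using pos unc Sform by blast
qed


end
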